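(* Let $\Sigma=\{\sigma_0,\sigma_1,\sigma_2\}$ and consider two users with confusion graphs $G_1=(\Sigma,\{\sigma_0\sigma_1\})$ and $G_2=(\Sigma,\emptyset)$. Then the following rate vectors are optimal: (i) $(R_1,\log_2 3-R_1)$ for $R_1\in[0,H(2/3)]$; (ii) $(H(R_2),R_2)$ for $R_2\in[1/2,2/3]$.
   Context: $H(x)=-x\log_2 x-(1-x)\log_2(1-x)$ is the binary entropy function (so $H(2/3)=\log_2 3-2/3$). Setting: a sender broadcasts a word of length $n$ over a finite alphabet $\Sigma$ to users; user $i$ has a confusion graph $G_i$ on $\Sigma$, where $ab$ is an edge iff user $i$ cannot distinguish $a$ and $b$. Words $x,y\in\Sigma^n$ are distinguishable by user $i$ if some coordinate $t$ has $x_t\neq y_t$ and $x_ty_t$ not an edge of $G_i$. A vector $(m_1,m_2)$ is feasible for length $n$ if there is $E:[m_1]\times[m_2]\to\Sigma^n$ such that for each $i$ and tuples $a,a'$ with $a_i\neq a'_i$, $E(a),E(a')$ are distinguishable by user $i$. A rate vector $(R_1,R_2)$ is feasible if there are feasible vectors for lengths $n\to\infty$ with $R_i=\lim\frac{\log_2 m_i^{(n)}}{n}$. A rate vector is optimal if it is feasible and no user can increase his rate while the other user keeps the same rate. *)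

theory Defs
  imports Complex_Main
begin

text \<open>Binary entropy function H(x) = -x log2 x - (1-x) log2 (1-x)
  (with the usual convention 0 log 0 = 0, which holds here since log 2 0 = 0).\<close>
definition bin_entropy :: "real \<Rightarrow> real" where
  "bin_entropy x = - x * log 2 x - (1 - x) * log 2 (1 - x)"

text \<open>A confusion graph is
  a relation G on the alphabet: G a b means the user cannot distinguish a and b.\<close>
definition distinguishable :: "('a \<Rightarrow> 'a \<Rightarrow> bool) \<Rightarrow> 'a list \<Rightarrow> 'a list \<Rightarrow> bool" where
  "distinguishable G x y \<longleftrightarrow>
     (\<exists>t < length x. t < length y \<and> x ! t \<noteq> y ! t \<and> \<not> G (x ! t) (y ! t))"

definition feasible_vector ::
  "'a set \<Rightarrow> ('a \<Rightarrow> 'a \<Rightarrow> bool) \<Rightarrow> ('a \<Rightarrow> 'a \<Rightarrow> bool) \<Rightarrow> nat \<Rightarrow> nat \<Rightarrow> nat \<Rightarrow> bool" where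
  "feasible_vector \<Sigma> G1 G2 n m1 m2 \<longleftrightarrow> m1 \<ge> 1 \<and> m2 \<ge> 1 \<and>
     (\<exists>E :: nat \<Rightarrow> nat \<Rightarrow> 'a list.
        (\<forall>a1 < m1. \<forall>a2 < m2. length (E a1 a2) = n \<and> set (E a1 a2) \<subseteq> \<Sigma>) \<and>
        (\<forall>a1 < m1. \<forall>a2 < m2. \<forall>a1' < m1. \<forall>a2' < m2.
            a1 \<noteq> a1' \<longrightarrow> distinguishable G1 (E a1 a2) (E a1' a2')) \<and>
        (\<forall>a1 < m1. \<forall>a2 < m2. \<forall>a1' < m1. \<forall>a2' < m2.
            a2 \<noteq> a2' \<longrightarrow> distinguishable G2 (E a1 a2) (E a1' a2')))"

definition feasible_rate ::
  "'a set \<Rightarrow> ('a \<Rightarrow> 'a \<Rightarrow> bool) \<Rightarrow> ('a \<Rightarrow> 'a \<Rightarrow> bool) \<Rightarrow> real \<Rightarrow> real \<Rightarrow> bool" where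
  "feasible_rate \<Sigma> G1 G2 R1 R2 \<longleftrightarrow>
     (\<exists>n m1 m2 :: nat \<Rightarrow> nat.
        filterlim n at_top sequentially \<and>
        (\<forall>k. feasible_vector \<Sigma> G1 G2 (n k) (m1 k) (m2 k)) \<and>
        (\<lambda>k. log 2 (real (m1 k)) / real (n k)) \<longlonglongrightarrow> R1 \<and>
        (\<lambda>k. log 2 (real (m2 k)) / real (n k)) \<longlonglongrightarrow> R2)"

definition optimal_rate ::
  "'a set \<Rightarrow> ('a \<Rightarrow> 'a \<Rightarrow> bool) \<Rightarrow> ('a \<Rightarrow> 'a \<Rightarrow> bool) \<Rightarrow> real \<Rightarrow> real \<Rightarrow> bool" where
  "optimal_rate \<Sigma> G1 G2 R1 R2 \<longleftrightarrow>
     feasible_rate \<Sigma> G1 G2 R1 R2 \<and>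
     (\<forall>R1'. R1' > R1 \<longrightarrow> \<not> feasible_rate \<Sigma> G1 G2 R1' R2) \<and>
     (\<forall>R2'. R2' > R2 \<longrightarrow> \<not> feasible_rate \<Sigma> G1 G2 R1 R2')"

end

theory Submission imports Defs "HOL-Library.FuncSet" begin

lemma binom_step_up:
  fixes n k j :: nat
  assumes "j < k" "k \<le> n"
  shows "(n choose j) * k^j * (n-k)^(n-j) \<le> (n choose Suc j) * k^Suc j * (n-k)^(n - Suc j)"
proof -
  have e: "(n - j) * (n choose j) = Suc j * (n choose Suc j)"
    using binomial_absorb_comp[of n j] binomial_absorption[of j n] by simp
  have nj: "n - j = Suc (n - Suc j)" using assms by simp
  have "Suc j \<le> k" using assms by simp
  moreover have "n - k \<le> n - j" using assms by simp
  ultimately have key: "Suc j * (n - k) \<le> k * (n - j)" by (rule mult_le_mono)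
  define X where "X = (n choose j) * k^j * (n-k)^(n - Suc j)"
  have "Suc j * ((n choose j) * k^j * (n-k)^(n-j)) = X * (Suc j * (n - k))"
    unfolding X_def nj power_Suc by (simp only: mult_ac)
  also have "\<dots> \<le> X * (k * (n - j))" using key by (rule mult_le_mono2)
  also have "\<dots> = ((n - j) * (n choose j)) * (k * k^j) * (n-k)^(n - Suc j)"
    unfolding X_def by (simp only: mult_ac)
  also have "\<dots> = Suc j * ((n choose Suc j) * k^Suc j * (n-k)^(n - Suc j))"
    unfolding e power_Suc by (simp only: mult_ac)
  finally show ?thesis by (simp only: mult_le_cancel1)
qed

lemma binom_step_down:
  fixes n k j :: nat
  assumes "k \<le> j" "j < n"
  shows "(n choose Suc j) * k^Suc j * (n-k)^(n - Suc j) \<le> (n choose j) * k^j * (n-k)^(n-j)"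
proof -
  have e: "(n - j) * (n choose j) = Suc j * (n choose Suc j)"
    using binomial_absorb_comp[of n j] binomial_absorption[of j n] by simp
  have nj: "n - j = Suc (n - Suc j)" using assms by simp
  have "k \<le> Suc j" using assms by simp
  moreover have "n - j \<le> n - k" using assms by simp
  ultimately have key: "k * (n - j) \<le> Suc j * (n - k)" by (metis mult_le_mono mult.commute)
  define X where "X = (n choose j) * k^j * (n-k)^(n - Suc j)"
  have "Suc j * ((n choose Suc j) * k^Suc j * (n-k)^(n - Suc j)) = ((n - j) * (n choose j)) * (k * k^j) * (n-k)^(n - Suc j)"
    unfolding e power_Suc by (simp only: mult_ac)
  also have "\<dots> = X * (k * (n - j))"
    unfolding X_def by (simp only: mult_ac)
  also have "\<dots> \<le> X * (Suc j * (n - k))" using key by (rule mult_le_mono2)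
  also have "\<dots> = Suc j * ((n choose j) * k^j * (n-k)^(n-j))"
    unfolding X_def nj power_Suc by (simp only: mult_ac)
  finally show ?thesis by (simp only: mult_le_cancel1)
qed

lemma binom_max:
  fixes n k j :: nat
  assumes "k \<le> n" "j \<le> n"
  shows "(n choose j) * k^j * (n-k)^(n-j) \<le> (n choose k) * k^k * (n-k)^(n-k)"
proof (cases "j \<le> k")
  case True
  show ?thesis using True
  proof (induction j rule: inc_induct)
    case base then show ?case by simp
  next
    case (step m)
    then show ?case using binom_step_up[of m k n] assms by linarith
  qed
next
  case False
  then have "k \<le> j" by simp
  then show ?thesis using assms(2)
  proof (induction j rule: dec_induct)
    case base then show ?case by simp
  next
    case (step m)
    then show ?case using binom_step_down[of k m n] by linarith
  qed
qed

lemma binom_bounds: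
  fixes n k :: nat
  assumes "k \<le> n"
  shows "(n choose k) * k^k * (n-k)^(n-k) \<le> n^n"
    and "n^n \<le> (n+1) * ((n choose k) * k^k * (n-k)^(n-k))"
proof -
  have s: "n^n = (\<Sum>j\<le>n. (n choose j) * k^j * (n-k)^(n-j))"
    using binomial_ring[of k "n-k" n] assms by simp
  show "(n choose k) * k^k * (n-k)^(n-k) \<le> n^n"
    unfolding s by (rule member_le_sum[of k "{..n}" "\<lambda>j. (n choose j) * k^j * (n-k)^(n-j)"]) (use assms in auto)
  have "(\<Sum>j\<le>n. (n choose j) * k^j * (n-k)^(n-j)) \<le> (\<Sum>j\<le>n. (n choose k) * k^k * (n-k)^(n-k))"
    by (rule sum_mono) (use binom_max assms in auto)
  then show "n^n \<le> (n+1) * ((n choose k) * k^k * (n-k)^(n-k))" unfolding s by simp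
qed

lemma H_nk:
  fixes n k :: nat
  assumes "0 < k" "k < n"
  shows "real n * bin_entropy (real k / real n) = real n * log 2 n - real k * log 2 k - (real n - real k) * log 2 (real n - real k)"
proof -
  have n: "real n > 0" using assms by simp
  have 1: "1 - real k / real n = (real n - real k) / real n" using n by (simp add: field_simps)
  have A: "log 2 (real k / real n) = log 2 k - log 2 n" using assms by (simp add: log_divide)
  have B: "log 2 ((real n - real k) / real n) = log 2 (real n - real k) - log 2 n"
    using assms by (simp add: log_divide)
  have "real n * bin_entropy (real k / real n) = - real k * (log 2 k - log 2 n) - (real n - real k) * (log 2 (real n - real k) - log 2 n)"
    unfolding bin_entropy_def 1 A B using n by (simp add: field_simps)
  then show ?thesis by (simp add: algebra_simps)
qed

lemma log_binom_bounds:
  fixes n k :: nat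
  assumes "0 < k" "k < n"
  shows "log 2 (n choose k) \<le> real n * bin_entropy (real k / real n)"
    and "real n * bin_entropy (real k / real n) - log 2 (real n + 1) \<le> log 2 (n choose k)"
proof -
  have kn: "k \<le> n" using assms by simp
  have C: "real (n choose k) > 0" using kn by simp
  have rk: "real (n - k) = real n - real k" using kn by simp
  have pos: "real n - real k > 0" using assms by simp
  have L: "log 2 (real (n choose k) * real k ^ k * (real n - real k) ^ (n - k))
      = log 2 (n choose k) + real k * log 2 k + (real n - real k) * log 2 (real n - real k)"
    using C pos assms by (simp add: log_mult log_nat_power rk)
  have b1: "real ((n choose k) * k^k * (n-k)^(n-k)) \<le> real (n^n)"
    using binom_bounds(1)[OF kn] by (simp only: of_nat_le_iff)
  have b2: "real (n^n) \<le> real ((n+1) * ((n choose k) * k^k * (n-k)^(n-k)))"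
    using binom_bounds(2)[OF kn] by (simp only: of_nat_le_iff)
  have P: "real (n choose k) * real k ^ k * (real n - real k) ^ (n - k) > 0"
    using C pos assms by simp
  have "log 2 (real (n choose k) * real k ^ k * (real n - real k) ^ (n - k)) \<le> log 2 (real n ^ n)"
    using b1 P by (intro log_mono) (simp_all add: rk)
  then show "log 2 (n choose k) \<le> real n * bin_entropy (real k / real n)"
    unfolding H_nk[OF assms] L using assms by (simp add: log_nat_power)
  have "log 2 (real n ^ n) \<le> log 2 ((real n + 1) * (real (n choose k) * real k ^ k * (real n - real k) ^ (n - k)))"
    using b2 P assms by (intro log_mono) (simp_all add: rk algebra_simps)
  also have "\<dots> = log 2 (real n + 1) + log 2 (real (n choose k) * real k ^ k * (real n - real k) ^ (n - k))"
    by (rule log_mult_pos) (use P in auto)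
  finally show "real n * bin_entropy (real k / real n) - log 2 (real n + 1) \<le> log 2 (n choose k)"
    unfolding H_nk[OF assms] L using assms by (simp add: log_nat_power)
qed

lemma H_deriv:
  assumes "0 < x" "x < 1"
  shows "DERIV bin_entropy x :> log 2 (1 - x) - log 2 x"
proof -
  have "DERIV (\<lambda>x. - x * log 2 x - (1 - x) * log 2 (1 - x)) x :>
     - (1 * log 2 x + x * (1 / (ln 2 * x))) - ((-1) * log 2 (1 - x) + (1 - x) * (1 / (ln 2 * (1 - x)) * (-1)))"
    by (rule derivative_eq_intros DERIV_log refl | use assms in simp)+
  moreover have "- (1 * log 2 x + x * (1 / (ln 2 * x))) - ((-1) * log 2 (1 - x) + (1 - x) * (1 / (ln 2 * (1 - x)) * (-1)))
     = log 2 (1 - x) - log 2 x" using assms by (simp add: field_simps)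
  ultimately show ?thesis unfolding bin_entropy_def[abs_def] by simp
qed

lemma H_cont: "0 < x \<Longrightarrow> x < 1 \<Longrightarrow> isCont bin_entropy x"
  using H_deriv DERIV_isCont by blast

lemma H_dec_strict:
  assumes "1/2 \<le> a" "a < b" "b < 1"
  shows "bin_entropy b < bin_entropy a"
proof -
  define c where "c = (a + b) / 2"
  have c: "1/2 < c" "a < c" "c < b" using assms by (auto simp: c_def)
  have neg: "log 2 (1 - x) - log 2 x < 0" if "1/2 < x" "x < 1" for x :: real
    using that by simp
  have nonpos: "log 2 (1 - x) - log 2 x \<le> 0" if "1/2 \<le> x" "x < 1" for x :: real
    using that by simp
  have "bin_entropy b < bin_entropy c"
  proof (rule DERIV_neg_imp_decreasing[OF c(3)])
    fix x assume "c \<le> x" "x \<le> b"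
    then have "0 < x" "x < 1" "1/2 < x" using c assms by auto
    then show "\<exists>y. DERIV bin_entropy x :> y \<and> y < 0" using H_deriv neg by blast
  qed
  moreover have "bin_entropy c \<le> bin_entropy a"
  proof (rule DERIV_nonpos_imp_decreasing_open[of a c])
    show "a \<le> c" using c by simp
    show "\<exists>y. DERIV bin_entropy x :> y \<and> y \<le> 0" if "a < x" "x < c" for x
    proof -
      have "0 < x" "x < 1" "1/2 \<le> x" using that c assms by auto
      then show ?thesis using H_deriv nonpos by blast
    qed
    show "continuous_on {a..c} bin_entropy"
      by (rule continuous_at_imp_continuous_on) (use c assms H_cont in force)
  qed
  ultimately show ?thesis by simp
qed

lemma H_23: "bin_entropy (2/3) = log 2 3 - 2/3"
proof -
  have "log 2 (2/3) = 1 - log 2 3" by (simp add: log_divide)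
  moreover have "log 2 (1/3) = - log 2 3" by (simp add: log_divide)
  moreover have "(1::real) - 2/3 = 1/3" by simp
  ultimately show ?thesis unfolding bin_entropy_def by (simp add: field_simps)
qed


lemma dist_neq: "distinguishable G x y \<Longrightarrow> x \<noteq> y"
  unfolding distinguishable_def by auto

lemma dist_False:
  assumes "length x = length y" "x \<noteq> y"
  shows "distinguishable (\<lambda>a b. False) x y"
proof -
  have "\<exists>t<length x. x!t \<noteq> y!t" using assms by (metis nth_equalityI)
  then show ?thesis unfolding distinguishable_def using assms(1) by auto
qed


lemma sum_lists_prod:
  fixes f :: "'a \<Rightarrow> real"
  assumes "finite A"
  shows "(\<Sum>w\<in>{w. set w \<subseteq> A \<and> length w = n}. prod_list (map f w)) = (sum f A) ^ n"
proof (induction n)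
  case 0
  have "{w. set w \<subseteq> A \<and> length w = 0} = {[]}" by auto
  then show ?case by simp
next
  case (Suc n)
  let ?W = "{w. set w \<subseteq> A \<and> length w = n}"
  have inj: "inj_on (\<lambda>(xs, a). a # xs) (?W \<times> A)" by (auto simp: inj_on_def)
  have "(\<Sum>w\<in>{w. set w \<subseteq> A \<and> length w = Suc n}. prod_list (map f w))
      = (\<Sum>p\<in>?W \<times> A. prod_list (map f ((\<lambda>(xs, a). a # xs) p)))"
    unfolding lists_length_Suc_eq by (rule sum.reindex[OF inj, unfolded comp_def])
  also have "\<dots> = (\<Sum>xs\<in>?W. \<Sum>a\<in>A. f a * prod_list (map f xs))"
    by (simp add: sum.cartesian_product split_def)
  also have "\<dots> = (\<Sum>xs\<in>?W. prod_list (map f xs) * sum f A)"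
    by (simp add: sum_distrib_right sum_distrib_left mult.commute)
  also have "\<dots> = (\<Sum>xs\<in>?W. prod_list (map f xs)) * sum f A"
    by (simp add: sum_distrib_right)
  also have "\<dots> = (sum f A) ^ Suc n" using Suc by (simp add: mult.commute)
  finally show ?case .
qed

definition cnt :: "'a \<Rightarrow> 'a list \<Rightarrow> nat" where
  "cnt z w = length (filter (\<lambda>c. c \<noteq> z) w)"

lemma prod_cnt: "prod_list (map (\<lambda>c. if c = z then 1 else x) w) = (x::real) ^ cnt z w"
  unfolding cnt_def by (induction w) auto



lemma lim_log_over_n: "(\<lambda>n. log 2 (real n + 1) / real n) \<longlonglongrightarrow> 0"
proof (rule real_tendsto_sandwich)
  show "eventually (\<lambda>n. 0 \<le> log 2 (real n + 1) / real n) sequentially" by simp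
  show "eventually (\<lambda>n. log 2 (real n + 1) / real n \<le> 1 / real n + (ln (real n) / real n) / ln 2) sequentially"
    using eventually_ge_at_top[of "1::nat"]
  proof eventually_elim
    case (elim n)
    then have n: "real n \<ge> 1" by simp
    have "log 2 (real n + 1) \<le> log 2 (2 * real n)" using n by (intro log_mono) auto
    also have "\<dots> = 1 + ln (real n) / ln 2" using n by (subst log_mult_pos) (auto simp: log_def)
    finally have "log 2 (real n + 1) / real n \<le> (1 + ln (real n) / ln 2) / real n"
      using n by (intro divide_right_mono) auto
    also have "\<dots> = 1 / real n + (ln (real n) / real n) / ln 2" by (simp add: add_divide_distrib)
    finally show ?case .
  qed
  show "(\<lambda>n. 0) \<longlonglongrightarrow> (0::real)" by simp
  have "(\<lambda>n. ln (real n) / real n) \<longlonglongrightarrow> 0"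
    by (rule filterlim_compose[OF ln_x_over_x_tendsto_0 filterlim_real_sequentially])
  then have "(\<lambda>n. 1 / real n + (ln (real n) / real n) / ln 2) \<longlonglongrightarrow> 0 + 0 / ln 2"
    by (intro tendsto_add tendsto_divide lim_const_over_n tendsto_const) auto
  then show "(\<lambda>n. 1 / real n + (ln (real n) / real n) / ln 2) \<longlonglongrightarrow> 0" by simp
qed

lemma lim_floor:
  assumes "0 \<le> \<rho>"
  shows "(\<lambda>n. real (nat \<lfloor>\<rho> * real n\<rfloor>) / real n) \<longlonglongrightarrow> \<rho>"
proof (rule real_tendsto_sandwich)
  show "eventually (\<lambda>n. \<rho> - 1 / real n \<le> real (nat \<lfloor>\<rho> * real n\<rfloor>) / real n) sequentially"
    using eventually_ge_at_top[of "1::nat"]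
  proof eventually_elim
    case (elim n)
    have k: "\<rho> * real n - 1 \<le> real (nat \<lfloor>\<rho> * real n\<rfloor>)" using assms by linarith
    have n: "real n > 0" using elim by simp
    have "\<rho> - 1 / real n = (\<rho> * real n - 1) / real n" using n by (simp add: field_simps)
    also have "\<dots> \<le> real (nat \<lfloor>\<rho> * real n\<rfloor>) / real n" using k n by (intro divide_right_mono) auto
    finally show ?case .
  qed
  show "eventually (\<lambda>n. real (nat \<lfloor>\<rho> * real n\<rfloor>) / real n \<le> \<rho>) sequentially"
    using eventually_ge_at_top[of "1::nat"]
  proof eventually_elim
    case (elim n)
    have k: "real (nat \<lfloor>\<rho> * real n\<rfloor>) \<le> \<rho> * real n" using assms by simp
    have n: "real n > 0" using elim by simp
    have "real (nat \<lfloor>\<rho> * real n\<rfloor>) / real n \<le> (\<rho> * real n) / real n" using k n by (intro divide_right_mono) auto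
    also have "\<dots> = \<rho>" using n by simp
    finally show ?case .
  qed
  show "(\<lambda>n. \<rho> - 1 / real n) \<longlonglongrightarrow> \<rho>"
    using tendsto_diff[OF tendsto_const lim_const_over_n[of 1]] by simp
  show "(\<lambda>n. \<rho>) \<longlonglongrightarrow> \<rho>" by simp
qed

lemma lim_ceil:
  assumes "0 \<le> s"
  shows "(\<lambda>n. log 2 (real (nat \<lceil>2 powr (s * real n)\<rceil>)) / real n) \<longlonglongrightarrow> s"
proof (rule real_tendsto_sandwich)
  have b: "s * real n \<le> log 2 (real (nat \<lceil>2 powr (s * real n)\<rceil>)) \<and>
           log 2 (real (nat \<lceil>2 powr (s * real n)\<rceil>)) \<le> 1 + s * real n" for n
  proof -
    define x where "x = 2 powr (s * real n)"
    have x: "x \<ge> 1" unfolding x_def using assms by (intro ge_one_powr_ge_zero) auto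
    have c: "real (nat \<lceil>x\<rceil>) = of_int \<lceil>x\<rceil>" using x by simp
    have c1: "x \<le> of_int \<lceil>x\<rceil>" "of_int \<lceil>x\<rceil> \<le> 2 * x" using x by linarith+
    have "s * real n = log 2 x" unfolding x_def by simp
    also have "\<dots> \<le> log 2 (real (nat \<lceil>x\<rceil>))" unfolding c using c1 x by (intro log_mono) auto
    finally have 1: "s * real n \<le> log 2 (real (nat \<lceil>x\<rceil>))" .
    have "log 2 (real (nat \<lceil>x\<rceil>)) \<le> log 2 (2 * x)" unfolding c using c1 x by (intro log_mono) auto
    also have "\<dots> = 1 + s * real n" using x unfolding x_def by (simp add: log_mult_pos)
    finally show ?thesis using 1 unfolding x_def by simp
  qed
  show "eventually (\<lambda>n. s \<le> log 2 (real (nat \<lceil>2 powr (s * real n)\<rceil>)) / real n) sequentially"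
    using eventually_ge_at_top[of "1::nat"]
  proof eventually_elim
    case (elim n)
    then have n: "real n > 0" by simp
    then show ?case using b[of n] by (subst pos_le_divide_eq) auto
  qed
  show "eventually (\<lambda>n. log 2 (real (nat \<lceil>2 powr (s * real n)\<rceil>)) / real n \<le> s + 1 / real n) sequentially"
    using eventually_ge_at_top[of "1::nat"]
  proof eventually_elim
    case (elim n)
    then have n: "real n > 0" by simp
    have "log 2 (real (nat \<lceil>2 powr (s * real n)\<rceil>)) / real n \<le> (1 + s * real n) / real n"
      using b[of n] n by (intro divide_right_mono) auto
    also have "\<dots> = s + 1 / real n" using n by (simp add: add_divide_distrib)
    finally show ?case .
  qed
  show "(\<lambda>n. s) \<longlonglongrightarrow> s" by simp
  show "(\<lambda>n. s + 1 / real n) \<longlonglongrightarrow> s"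
    using tendsto_add[OF tendsto_const lim_const_over_n[of 1]] by simp
qed

locale three =
  fixes s0 s1 s2 :: 'a
  assumes d01: "s0 \<noteq> s1" and d02: "s0 \<noteq> s2" and d12: "s1 \<noteq> s2"
begin

abbreviation "Sg \<equiv> {s0, s1, s2}"
abbreviation "GG1 \<equiv> (\<lambda>a b. (a = s0 \<and> b = s1) \<or> (a = s1 \<and> b = s0))"
abbreviation "GG2 \<equiv> (\<lambda>(a::'a) (b::'a). False)"

lemma feasE:
  assumes "feasible_vector Sg GG1 GG2 n m1 m2"
  obtains E where "m1 \<ge> 1" "m2 \<ge> 1"
    "\<And>a b. a < m1 \<Longrightarrow> b < m2 \<Longrightarrow> length (E a b) = n \<and> set (E a b) \<subseteq> Sg"
    "\<And>a b a' b'. a < m1 \<Longrightarrow> b < m2 \<Longrightarrow> a' < m1 \<Longrightarrow> b' < m2 \<Longrightarrow> a \<noteq> a' \<Longrightarrow> distinguishable GG1 (E a b) (E a' b')"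
    "\<And>a b a' b'. a < m1 \<Longrightarrow> b < m2 \<Longrightarrow> a' < m1 \<Longrightarrow> b' < m2 \<Longrightarrow> (a, b) \<noteq> (a', b') \<Longrightarrow> E a b \<noteq> E a' b'"
proof -
  from assms obtain E where m: "m1 \<ge> 1" "m2 \<ge> 1" and
    E1: "\<forall>a1 < m1. \<forall>a2 < m2. length (E a1 a2) = n \<and> set (E a1 a2) \<subseteq> Sg" and
    E2: "\<forall>a1 < m1. \<forall>a2 < m2. \<forall>a1' < m1. \<forall>a2' < m2.
            a1 \<noteq> a1' \<longrightarrow> distinguishable GG1 (E a1 a2) (E a1' a2')" and
    E3: "\<forall>a1 < m1. \<forall>a2 < m2. \<forall>a1' < m1. \<forall>a2' < m2.
            a2 \<noteq> a2' \<longrightarrow> distinguishable GG2 (E a1 a2) (E a1' a2')"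
    unfolding feasible_vector_def by blast
  show thesis
  proof (rule that[OF m])
    show "\<And>a b. a < m1 \<Longrightarrow> b < m2 \<Longrightarrow> length (E a b) = n \<and> set (E a b) \<subseteq> Sg" using E1 by blast
    show "\<And>a b a' b'. a < m1 \<Longrightarrow> b < m2 \<Longrightarrow> a' < m1 \<Longrightarrow> b' < m2 \<Longrightarrow> a \<noteq> a' \<Longrightarrow> distinguishable GG1 (E a b) (E a' b')"
      using E2 by blast
    show "E a b \<noteq> E a' b'" if "a < m1" "b < m2" "a' < m1" "b' < m2" "(a, b) \<noteq> (a', b')" for a b a' b'
    proof (cases "a = a'")
      case True
      then have "b \<noteq> b'" using that by simp
      then have "distinguishable GG2 (E a b) (E a' b')" using E3 that by blast
      then show ?thesis by (rule dist_neq)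
    next
      case False
      then have "distinguishable GG1 (E a b) (E a' b')" using E2 that by blast
      then show ?thesis by (rule dist_neq)
    qed
  qed
qed

lemma sum_bound:
  assumes "feasible_vector Sg GG1 GG2 n m1 m2"
  shows "m1 * m2 \<le> 3 ^ n"
proof -
  obtain E where "m1 \<ge> 1" "m2 \<ge> 1" and
    E1: "\<And>a b. a < m1 \<Longrightarrow> b < m2 \<Longrightarrow> length (E a b) = n \<and> set (E a b) \<subseteq> Sg" and
    "\<And>a b a' b'. a < m1 \<Longrightarrow> b < m2 \<Longrightarrow> a' < m1 \<Longrightarrow> b' < m2 \<Longrightarrow> a \<noteq> a' \<Longrightarrow> distinguishable GG1 (E a b) (E a' b')" and
    E2: "\<And>a b a' b'. a < m1 \<Longrightarrow> b < m2 \<Longrightarrow> a' < m1 \<Longrightarrow> b' < m2 \<Longrightarrow> (a, b) \<noteq> (a', b') \<Longrightarrow> E a b \<noteq> E a' b'"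
    using feasE[OF assms] by blast
  have inj: "inj_on (\<lambda>(a, b). E a b) ({0..<m1} \<times> {0..<m2})"
    unfolding inj_on_def using E2 by fastforce
  have sub: "(\<lambda>(a, b). E a b) ` ({0..<m1} \<times> {0..<m2}) \<subseteq> {w. set w \<subseteq> Sg \<and> length w = n}"
  proof (rule image_subsetI)
    fix p assume "p \<in> {0..<m1} \<times> {0..<m2}"
    then show "(\<lambda>(a, b). E a b) p \<in> {w. set w \<subseteq> Sg \<and> length w = n}"
      using E1 by (cases p) simp
  qed
  have "m1 * m2 = card ({0..<m1} \<times> {0..<m2})" by simp
  also have "\<dots> \<le> card {w. set w \<subseteq> Sg \<and> length w = n}"
    by (rule card_inj_on_le[OF inj sub]) (simp add: finite_lists_length_eq)
  also have "\<dots> = 3 ^ n" using d01 d02 d12 by (simp add: card_lists_length_eq numeral_3_eq_3)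
  finally show ?thesis .
qed


lemma G1_pat:
  assumes "distinguishable GG1 x y" "set x \<subseteq> Sg" "set y \<subseteq> Sg"
  shows "\<exists>t<length x. t < length y \<and> (x!t = s2) \<noteq> (y!t = s2)"
proof -
  obtain t where t: "t < length x" "t < length y" "x!t \<noteq> y!t" "\<not> GG1 (x!t) (y!t)"
    using assms(1) unfolding distinguishable_def by blast
  have "x!t \<in> Sg" using nth_mem[OF t(1)] assms(2) by blast
  moreover have "y!t \<in> Sg" using nth_mem[OF t(2)] assms(3) by blast
  ultimately have "(x!t = s2) \<noteq> (y!t = s2)"
  proof (clarify)
    assume "x!t \<in> Sg" "y!t \<in> Sg" and eq: "(x!t = s2) = (y!t = s2)"
    show False
    proof (cases "x!t = s2")
      case True then show False using eq t(3) by simp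
    next
      case False then show False using eq t(3,4) \<open>x!t \<in> Sg\<close> \<open>y!t \<in> Sg\<close> by auto
    qed
  qed
  then show ?thesis using t(1,2) by (intro exI[of _ t]) simp
qed

lemma cnt_canon: "cnt s2 (map (\<lambda>c. if c = s2 then s2 else s0) w) = cnt s2 w"
  unfolding cnt_def using d02 by (induction w) auto

lemma card_le_weighted:
  fixes wt :: "'b \<Rightarrow> real"
  assumes "finite W" "V \<subseteq> W" "\<And>v. v \<in> V \<Longrightarrow> 1 \<le> wt v" "\<And>v. v \<in> W \<Longrightarrow> 0 \<le> wt v"
  shows "real (card V) \<le> sum wt W"
proof -
  have "real (card V) = (\<Sum>v\<in>V. 1)" by simp
  also have "\<dots> \<le> sum wt V" by (rule sum_mono) (use assms in auto)
  also have "\<dots> \<le> sum wt W" by (rule sum_mono2) (use assms in auto)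
  finally show ?thesis .
qed


lemma bound_B0:
  assumes feas: "feasible_vector Sg GG1 GG2 n m1 m2" and mu: "1 \<le> \<mu>" and la: "0 < lam" "lam \<le> 1"
  shows "real m1 \<le> (1 + \<mu>)^n / \<mu> powr \<tau> + (1 + 2*lam)^n / lam powr \<tau> / real m2"
proof -
  obtain E where m: "m1 \<ge> 1" "m2 \<ge> 1" and
    E1: "\<And>a b. a < m1 \<Longrightarrow> b < m2 \<Longrightarrow> length (E a b) = n \<and> set (E a b) \<subseteq> Sg" and
    E2: "\<And>a b a' b'. a < m1 \<Longrightarrow> b < m2 \<Longrightarrow> a' < m1 \<Longrightarrow> b' < m2 \<Longrightarrow> a \<noteq> a' \<Longrightarrow> distinguishable GG1 (E a b) (E a' b')" and
    E3: "\<And>a b a' b'. a < m1 \<Longrightarrow> b < m2 \<Longrightarrow> a' < m1 \<Longrightarrow> b' < m2 \<Longrightarrow> (a, b) \<noteq> (a', b') \<Longrightarrow> E a b \<noteq> E a' b'"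
    using feasE[OF feas] by blast
  define Ab where "Ab = {a \<in> {0..<m1}. \<exists>b<m2. \<tau> \<le> real (cnt s2 (E a b))}"
  define Bb where "Bb = {a \<in> {0..<m1}. \<forall>b<m2. real (cnt s2 (E a b)) < \<tau>}"
  have U: "{0..<m1} = Ab \<union> Bb" unfolding Ab_def Bb_def by (auto simp: not_le)
  have fin: "finite Ab" "finite Bb" unfolding Ab_def Bb_def by auto
  have m1: "m1 \<le> card Ab + card Bb"
    using card_Un_le[of Ab Bb] U by (metis card_atLeastLessThan diff_zero)
  define canon where "canon w = map (\<lambda>c. if c = s2 then s2 else s0) w" for w
  define pick where "pick a = (SOME b. b < m2 \<and> \<tau> \<le> real (cnt s2 (E a b)))" for a
  have pick: "pick a < m2 \<and> \<tau> \<le> real (cnt s2 (E a (pick a)))" if "a \<in> Ab" for a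
    using that unfolding Ab_def pick_def by (metis (mono_tags, lifting) mem_Collect_eq someI_ex)
  define c where "c a = canon (E a (pick a))" for a
  have inj: "inj_on c Ab"
  proof (rule inj_onI)
    fix a a' assume aa: "a \<in> Ab" "a' \<in> Ab" "c a = c a'"
    show "a = a'"
    proof (rule ccontr)
      assume "a \<noteq> a'"
      have am: "a < m1" "a' < m1" using aa unfolding Ab_def by auto
      have "distinguishable GG1 (E a (pick a)) (E a' (pick a'))"
        using E2 am pick aa \<open>a \<noteq> a'\<close> by blast
      then obtain t where t: "t < length (E a (pick a))" "t < length (E a' (pick a'))"
        "(E a (pick a) ! t = s2) \<noteq> (E a' (pick a') ! t = s2)"
        using G1_pat E1 am pick aa by blast
      have "c a ! t \<noteq> c a' ! t" using t d02 unfolding c_def canon_def by auto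
      then show False using aa by simp
    qed
  qed
  have sub: "c ` Ab \<subseteq> {v. set v \<subseteq> {s0, s2} \<and> length v = n \<and> \<tau> \<le> real (cnt s2 v)}"
  proof
    fix v assume "v \<in> c ` Ab"
    then obtain a where a: "a \<in> Ab" "v = c a" by blast
    have am: "a < m1" using a unfolding Ab_def by auto
    show "v \<in> {v. set v \<subseteq> {s0, s2} \<and> length v = n \<and> \<tau> \<le> real (cnt s2 v)}"
      using a am pick[OF a(1)] E1[of a "pick a"] cnt_canon unfolding c_def canon_def by auto
  qed
  let ?W2 = "{v. set v \<subseteq> {s0, s2} \<and> length v = n}"
  define wA where "wA v = \<mu> ^ cnt s2 v / \<mu> powr \<tau>" for v
  have "real (card Ab) = real (card (c ` Ab))" using inj by (simp add: card_image)
  also have "\<dots> \<le> sum wA ?W2"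
  proof (rule card_le_weighted)
    show "finite ?W2" by (simp add: finite_lists_length_eq)
    show "c ` Ab \<subseteq> ?W2" using sub by auto
    show "1 \<le> wA v" if "v \<in> c ` Ab" for v
    proof -
      have "\<tau> \<le> real (cnt s2 v)" using sub that by auto
      then have "\<mu> powr \<tau> \<le> \<mu> powr real (cnt s2 v)" using mu by (rule powr_mono)
      then show ?thesis unfolding wA_def using mu by (simp add: powr_realpow)
    qed
    show "0 \<le> wA v" for v unfolding wA_def using mu by simp
  qed
  also have "\<dots> = (\<Sum>v\<in>?W2. prod_list (map (\<lambda>c. if c = s2 then 1 else \<mu>) v)) / \<mu> powr \<tau>"
    unfolding wA_def prod_cnt by (simp add: sum_divide_distrib)
  also have "\<dots> = (1 + \<mu>)^n / \<mu> powr \<tau>"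
    by (subst sum_lists_prod) (use d02 in \<open>simp_all add: add.commute\<close>)
  finally have A: "real (card Ab) \<le> (1 + \<mu>)^n / \<mu> powr \<tau>" .
  let ?W = "{v. set v \<subseteq> Sg \<and> length v = n}"
  have injB: "inj_on (\<lambda>(a, b). E a b) (Bb \<times> {0..<m2})"
    unfolding inj_on_def Bb_def using E3 by fastforce
  have subB: "(\<lambda>(a, b). E a b) ` (Bb \<times> {0..<m2}) \<subseteq> {v. set v \<subseteq> Sg \<and> length v = n \<and> real (cnt s2 v) < \<tau>}"
  proof (rule image_subsetI)
    fix p assume p: "p \<in> Bb \<times> {0..<m2}"
    then have "fst p < m1" "snd p < m2" "real (cnt s2 (E (fst p) (snd p))) < \<tau>" unfolding Bb_def by auto
    then show "(\<lambda>(a, b). E a b) p \<in> {v. set v \<subseteq> Sg \<and> length v = n \<and> real (cnt s2 v) < \<tau>}"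
      using E1 by (simp add: split_def)
  qed
  define wB where "wB v = lam ^ cnt s2 v / lam powr \<tau>" for v
  have "real (card Bb) * real m2 = real (card ((\<lambda>(a, b). E a b) ` (Bb \<times> {0..<m2})))"
    using injB by (simp add: card_image card_cartesian_product)
  also have "\<dots> \<le> sum wB ?W"
  proof (rule card_le_weighted)
    show "finite ?W" by (simp add: finite_lists_length_eq)
    show "(\<lambda>(a, b). E a b) ` (Bb \<times> {0..<m2}) \<subseteq> ?W" using subB by auto
    show "1 \<le> wB v" if "v \<in> (\<lambda>(a, b). E a b) ` (Bb \<times> {0..<m2})" for v
    proof -
      have "real (cnt s2 v) \<le> \<tau>" using subB that by fastforce
      then have "lam powr \<tau> \<le> lam powr real (cnt s2 v)" using la by (intro powr_mono') auto
      then show ?thesis unfolding wB_def using la by (simp add: powr_realpow)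
    qed
    show "0 \<le> wB v" for v unfolding wB_def using la by simp
  qed
  also have "\<dots> = (\<Sum>v\<in>?W. prod_list (map (\<lambda>c. if c = s2 then 1 else lam) v)) / lam powr \<tau>"
    unfolding wB_def prod_cnt by (simp add: sum_divide_distrib)
  also have "\<dots> = (1 + 2*lam)^n / lam powr \<tau>"
    by (subst sum_lists_prod) (use d01 d02 d12 in \<open>simp_all add: algebra_simps\<close>)
  finally have B0: "real (card Bb) * real m2 \<le> (1 + 2*lam)^n / lam powr \<tau>" .
  have B: "real (card Bb) \<le> (1 + 2*lam)^n / lam powr \<tau> / real m2"
    using m B0 by (subst pos_le_divide_eq) auto
  have "real m1 \<le> real (card Ab) + real (card Bb)" using m1 by linarith
  then show ?thesis using A B by linarith
qed

lemma pow_div_powr: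
  assumes "x > 0" "y > 0"
  shows "x ^ n / y powr t = 2 powr (real n * log 2 x - t * log 2 y)"
proof -
  have "x ^ n / y powr t > 0" using assms by simp
  then have "x ^ n / y powr t = 2 powr (log 2 (x ^ n / y powr t))" by simp
  also have "log 2 (x ^ n / y powr t) = real n * log 2 x - t * log 2 y"
    using assms by (simp add: log_divide log_nat_power log_powr)
  finally show ?thesis .
qed

lemma bound_B:
  assumes feas: "feasible_vector Sg GG1 GG2 n m1 m2" and r: "1/2 \<le> \<rho>" "\<rho> \<le> 2/3"
  shows "real m1 \<le> 2 powr (real n * bin_entropy \<rho>) + 2 powr (real n * (bin_entropy \<rho> + \<rho>)) / real m2"
proof -
  define mu where "mu = \<rho> / (1 - \<rho>)"
  define lam where "lam = \<rho> / (2 * (1 - \<rho>))"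
  have r1: "0 < 1 - \<rho>" "0 < \<rho>" using r by auto
  have mu1: "1 \<le> mu" unfolding mu_def using r r1 by (simp add: field_simps)
  have lam: "0 < lam" "lam \<le> 1" unfolding lam_def using r r1 by (simp_all add: field_simps)
  have e1: "1 + mu = 1 / (1 - \<rho>)" "1 + 2 * lam = 1 / (1 - \<rho>)"
    unfolding mu_def lam_def using r1 by (simp_all add: field_simps)
  have L1: "log 2 (1 / (1 - \<rho>)) = - log 2 (1 - \<rho>)" using r1 by (simp add: log_divide)
  have Lmu: "log 2 mu = log 2 \<rho> - log 2 (1 - \<rho>)" unfolding mu_def using r1 by (simp add: log_divide)
  have l2: "log 2 (2 * (1 - \<rho>)) = 1 + log 2 (1 - \<rho>)"
    by (subst log_mult_pos) (use r1 in auto)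
  have "log 2 lam = log 2 \<rho> - log 2 (2 * (1 - \<rho>))" unfolding lam_def
    by (rule log_divide_pos) (use r1 in auto)
  then have Llam: "log 2 lam = log 2 \<rho> - 1 - log 2 (1 - \<rho>)" unfolding l2 by simp
  have A: "(1 + mu)^n / mu powr (\<rho> * real n) = 2 powr (real n * bin_entropy \<rho>)"
    using mu1 r1 unfolding pow_div_powr[of "1 + mu" mu n] e1(1) L1 Lmu bin_entropy_def
    by (subst pow_div_powr) (simp_all add: e1 L1 Lmu, simp add: algebra_simps)
  have B: "(1 + 2*lam)^n / lam powr (\<rho> * real n) = 2 powr (real n * (bin_entropy \<rho> + \<rho>))"
    using lam r1
    by (subst pow_div_powr) (simp_all add: e1 L1 Llam, simp add: bin_entropy_def algebra_simps)
  show ?thesis using bound_B0[OF feas mu1 lam, of "\<rho> * real n"] unfolding A B .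
qed

lemma rate_sum:
  assumes nn: "filterlim nn at_top sequentially"
    and feas: "\<And>k. feasible_vector Sg GG1 GG2 (nn k) (m1 k) (m2 k)"
    and l1: "(\<lambda>k. log 2 (real (m1 k)) / real (nn k)) \<longlonglongrightarrow> R1"
    and l2: "(\<lambda>k. log 2 (real (m2 k)) / real (nn k)) \<longlonglongrightarrow> R2"
  shows "R1 + R2 \<le> log 2 3"
proof -
  have ev: "eventually (\<lambda>k. 1 \<le> nn k) sequentially" using nn by (simp add: filterlim_at_top)
  have "eventually (\<lambda>k. log 2 (real (m1 k)) / real (nn k) + log 2 (real (m2 k)) / real (nn k) \<le> log 2 3) sequentially"
    using ev
  proof eventually_elim
    case (elim k)
    have m: "m1 k \<ge> 1" "m2 k \<ge> 1" using feas[of k] unfolding feasible_vector_def by auto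
    have "real (m1 k) * real (m2 k) \<le> 3 ^ nn k"
      using sum_bound[OF feas[of k]] by (metis of_nat_le_iff of_nat_mult of_nat_numeral of_nat_power)
    then have "log 2 (real (m1 k) * real (m2 k)) \<le> log 2 (3 ^ nn k)"
      using m by (intro log_mono) auto
    then have "log 2 (real (m1 k)) + log 2 (real (m2 k)) \<le> real (nn k) * log 2 3"
      using m by (simp add: log_mult_pos log_nat_power)
    then show ?case using elim by (simp add: divide_le_eq add_divide_distrib[symmetric] mult.commute)
  qed
  moreover have "(\<lambda>k. log 2 (real (m1 k)) / real (nn k) + log 2 (real (m2 k)) / real (nn k)) \<longlonglongrightarrow> R1 + R2"
    using l1 l2 by (rule tendsto_add)
  ultimately show ?thesis by (intro tendsto_le[OF _ tendsto_const]) auto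
qed

lemma rate_bound_B:
  assumes nn: "filterlim nn at_top sequentially"
    and feas: "\<And>k. feasible_vector Sg GG1 GG2 (nn k) (m1 k) (m2 k)"
    and l1: "(\<lambda>k. log 2 (real (m1 k)) / real (nn k)) \<longlonglongrightarrow> R1"
    and l2: "(\<lambda>k. log 2 (real (m2 k)) / real (nn k)) \<longlonglongrightarrow> R2"
    and r: "1/2 \<le> \<rho>" "\<rho> \<le> 2/3"
  shows "R1 \<le> max (bin_entropy \<rho>) (bin_entropy \<rho> + \<rho> - R2)"
proof -
  let ?H = "bin_entropy \<rho>"
  have ev: "eventually (\<lambda>k. 1 \<le> nn k) sequentially" using nn by (simp add: filterlim_at_top)
  have "eventually (\<lambda>k. log 2 (real (m1 k)) / real (nn k) \<le>
      1 / real (nn k) + max ?H (?H + \<rho> - log 2 (real (m2 k)) / real (nn k))) sequentially"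
    using ev
  proof eventually_elim
    case (elim k)
    let ?n = "real (nn k)"
    have m: "m1 k \<ge> 1" "m2 k \<ge> 1" using feas[of k] unfolding feasible_vector_def by auto
    define X where "X = 2 powr (?n * ?H)"
    define Y where "Y = 2 powr (?n * (?H + \<rho>)) / real (m2 k)"
    have XY: "X > 0" "Y > 0" using m unfolding X_def Y_def by auto
    have "real (m1 k) \<le> X + Y" unfolding X_def Y_def by (rule bound_B[OF feas r])
    also have "\<dots> \<le> 2 * max X Y" by simp
    finally have "log 2 (real (m1 k)) \<le> log 2 (2 * max X Y)"
      using m by (intro log_mono) auto
    also have "\<dots> = 1 + max (log 2 X) (log 2 Y)"
      using XY by (simp add: log_mult_pos max_def)
    also have "log 2 X = ?n * ?H" unfolding X_def by simp
    also have "log 2 Y = ?n * (?H + \<rho>) - log 2 (real (m2 k))"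
      unfolding Y_def using m by (simp add: log_divide)
    finally have *: "log 2 (real (m1 k)) \<le> 1 + max (?n * ?H) (?n * (?H + \<rho>) - log 2 (real (m2 k)))" .
    have n0: "?n > 0" using elim by simp
    have "max (?n * ?H) (?n * (?H + \<rho>) - log 2 (real (m2 k))) = ?n * max ?H (?H + \<rho> - log 2 (real (m2 k)) / ?n)"
      using n0 by (simp add: max_mult_distrib_left algebra_simps)
    with * have "log 2 (real (m1 k)) \<le> ?n * (1 / ?n + max ?H (?H + \<rho> - log 2 (real (m2 k)) / ?n))"
      using n0 by (simp add: algebra_simps)
    then show ?case using n0 by (simp add: divide_le_eq mult.commute)
  qed
  moreover have "(\<lambda>k. 1 / real (nn k) + max ?H (?H + \<rho> - log 2 (real (m2 k)) / real (nn k)))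
      \<longlonglongrightarrow> 0 + max ?H (?H + \<rho> - R2)"
  proof (intro tendsto_intros l2)
    have "filterlim (\<lambda>k. real (nn k)) at_top sequentially"
      by (rule filterlim_compose[OF filterlim_real_sequentially nn])
    then show "(\<lambda>k. 1 / real (nn k)) \<longlonglongrightarrow> 0"
      using tendsto_inverse_0_at_top by (simp add: inverse_eq_divide[symmetric]) blast
  qed
  ultimately show ?thesis by (intro tendsto_le[OF _ _ l1]) auto
qed

definition word :: "nat \<Rightarrow> nat set \<Rightarrow> (nat \<Rightarrow> 'a) \<Rightarrow> 'a list" where
  "word n P f = map (\<lambda>i. if i \<in> P then f i else s2) [0..<n]"

lemma word_props:
  assumes "f \<in> P \<rightarrow>\<^sub>E {s0, s1}"
  shows "length (word n P f) = n" "set (word n P f) \<subseteq> Sg"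
  using assms unfolding word_def by auto

lemma word_nth: "i < n \<Longrightarrow> word n P f ! i = (if i \<in> P then f i else s2)"
  unfolding word_def by simp

lemma word_P:
  assumes "P \<subseteq> {0..<n}" "f \<in> P \<rightarrow>\<^sub>E {s0, s1}"
  shows "P = {i. i < n \<and> word n P f ! i \<noteq> s2}"
proof -
  have "i \<in> P \<longleftrightarrow> i < n \<and> word n P f ! i \<noteq> s2" for i
  proof (cases "i < n")
    case True
    show ?thesis
    proof (cases "i \<in> P")
      case True
      then have "f i \<in> {s0, s1}" using assms(2) by (rule PiE_mem[rotated])
      then show ?thesis using True \<open>i < n\<close> d02 d12 by (auto simp: word_nth)
    next
      case False
      then show ?thesis using \<open>i < n\<close> by (simp add: word_nth)
    qed
  next
    case False
    then show ?thesis using assms(1) by auto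
  qed
  then show ?thesis by blast
qed

lemma word_inj:
  assumes "P \<subseteq> {0..<n}" "P' \<subseteq> {0..<n}" "f \<in> P \<rightarrow>\<^sub>E {s0, s1}" "f' \<in> P' \<rightarrow>\<^sub>E {s0, s1}"
    and eq: "word n P f = word n P' f'"
  shows "P = P' \<and> f = f'"
proof -
  have P: "P = {i. i < n \<and> word n P f ! i \<noteq> s2}"
    using assms(1,3) by (rule word_P)
  have P': "P' = {i. i < n \<and> word n P' f' ! i \<noteq> s2}"
    using assms(2,4) by (rule word_P)
  have PP: "P = P'" using P P' eq by simp
  have "f = f'"
  proof (rule PiE_ext[OF assms(3)])
    show "f' \<in> P \<rightarrow>\<^sub>E {s0, s1}" using assms(4) PP by simp
    fix i assume i: "i \<in> P"
    then have "i < n" using assms(1) by auto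
    then show "f i = f' i" using eq i PP word_nth[of i n P f] word_nth[of i n P' f'] by simp
  qed
  with PP show ?thesis by simp
qed

lemma word_G1:
  assumes "P \<subseteq> {0..<n}" "P' \<subseteq> {0..<n}" "f \<in> P \<rightarrow>\<^sub>E {s0, s1}" "f' \<in> P' \<rightarrow>\<^sub>E {s0, s1}"
    and ne: "P \<noteq> P'"
  shows "distinguishable GG1 (word n P f) (word n P' f')"
proof -
  obtain i where i: "(i \<in> P \<and> i \<notin> P') \<or> (i \<in> P' \<and> i \<notin> P)" using ne by blast
  then have "i < n" using assms(1,2) by auto
  moreover have "word n P f ! i \<noteq> word n P' f' ! i \<and> \<not> GG1 (word n P f ! i) (word n P' f' ! i)"
    using i \<open>i < n\<close> assms(3,4) d02 d12 by (auto simp: word_nth)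
  ultimately show ?thesis unfolding distinguishable_def using word_props assms by auto
qed

lemma construct:
  assumes kn: "k \<le> n" and g: "1 \<le> g" "g \<le> n choose k"
  shows "feasible_vector Sg GG1 GG2 n ((n choose k) div g) (g * 2^k)"
proof -
  define C where "C = n choose k"
  define PS where "PS = {P. P \<subseteq> {0..<n} \<and> card P = k}"
  have cardPS: "card PS = C" unfolding PS_def C_def using n_subsets[of "{0..<n}" k] by simp
  obtain pat where pat: "bij_betw pat {0..<C} PS"
    using ex_bij_betw_nat_finite[of PS] cardPS unfolding PS_def by auto
  define FS where "FS P = P \<rightarrow>\<^sub>E {s0, s1}" for P :: "nat set"
  have cardF: "card (FS P) = 2^k" if "P \<in> PS" for P
  proof -
    have "finite P" "card P = k" using that unfolding PS_def by (auto intro: finite_subset)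
    then show ?thesis unfolding FS_def using d01 by (simp add: card_PiE numeral_2_eq_2)
  qed
  have finF: "finite (FS P)" if "P \<in> PS" for P
    using that unfolding PS_def FS_def by (auto intro!: finite_PiE intro: finite_subset)
  define hb where "hb P = (SOME h. bij_betw h {0..<(2::nat)^k} (FS P))" for P
  have hb: "bij_betw (hb P) {0..<(2::nat)^k} (FS P)" if "P \<in> PS" for P
  proof -
    have "\<exists>h. bij_betw h {0..<(2::nat)^k} (FS P)"
      using ex_bij_betw_nat_finite[OF finF[OF that]] cardF[OF that] by simp
    then show ?thesis unfolding hb_def by (rule someI_ex)
  qed
  define idx where "idx a1 a2 = a1 * g + a2 div 2^k" for a1 a2 :: nat
  define E where "E a1 a2 = word n (pat (idx a1 a2)) (hb (pat (idx a1 a2)) (a2 mod 2^k))" for a1 a2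
  have q: "a2 div 2^k < g" if "a2 < g * 2^k" for a2 :: nat
    using that by (simp add: less_mult_imp_div_less)
  have idx_lt: "idx a1 a2 < C" if "a1 < C div g" "a2 < g * 2^k" for a1 a2
  proof -
    have "idx a1 a2 < a1 * g + g" unfolding idx_def using q[OF that(2)] by simp
    also have "\<dots> = (a1 + 1) * g" by simp
    also have "\<dots> \<le> (C div g) * g" using that(1) by (intro mult_le_mono1) simp
    also have "\<dots> \<le> C" by simp
    finally show ?thesis .
  qed
  have idx_div: "idx a1 a2 div g = a1" "idx a1 a2 mod g = a2 div 2^k" if "a2 < g * 2^k" for a1 a2
    using q[OF that] g unfolding idx_def by auto
  have patP: "pat (idx a1 a2) \<in> PS" if "a1 < C div g" "a2 < g * 2^k" for a1 a2
    using pat idx_lt[OF that] unfolding bij_betw_def by auto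
  have fF: "hb (pat (idx a1 a2)) (a2 mod 2^k) \<in> FS (pat (idx a1 a2))" if "a1 < C div g" "a2 < g * 2^k" for a1 a2
    using hb[OF patP[OF that]] unfolding bij_betw_def by auto
  have sub: "pat (idx a1 a2) \<subseteq> {0..<n}" if "a1 < C div g" "a2 < g * 2^k" for a1 a2
    using patP[OF that] unfolding PS_def by auto
  have pat_inj: "pat (idx a1 a2) \<noteq> pat (idx a1' a2')"
    if "a1 < C div g" "a2 < g * 2^k" "a1' < C div g" "a2' < g * 2^k" "idx a1 a2 \<noteq> idx a1' a2'" for a1 a2 a1' a2'
    using pat idx_lt that unfolding bij_betw_def inj_on_def by auto
  have m1: "1 \<le> C div g" using g unfolding C_def by (metis One_nat_def div_greater_zero_iff less_eq_Suc_le le_trans not_less_eq_eq)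
  show ?thesis unfolding feasible_vector_def C_def[symmetric]
  proof (intro conjI exI[of _ E] allI impI)
    show "1 \<le> C div g" by (rule m1)
    show "1 \<le> g * 2^k" using g by simp
    fix a1 a2 assume a: "a1 < C div g" "a2 < g * 2^k"
    show "length (E a1 a2) = n" "set (E a1 a2) \<subseteq> Sg"
      unfolding E_def using word_props fF[OF a] unfolding FS_def by auto
    fix a1' a2' assume a': "a1' < C div g" "a2' < g * 2^k"
    {
      assume ne: "a1 \<noteq> a1'"
      then have "idx a1 a2 \<noteq> idx a1' a2'" using idx_div(1)[OF a(2)] idx_div(1)[OF a'(2)] by metis
      then have "pat (idx a1 a2) \<noteq> pat (idx a1' a2')" using pat_inj a a' by blast
      then show "distinguishable GG1 (E a1 a2) (E a1' a2')"
        unfolding E_def using word_G1 sub[OF a] sub[OF a'] fF[OF a] fF[OF a'] unfolding FS_def by blast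
    }
    {
      assume ne: "a2 \<noteq> a2'"
      have "E a1 a2 \<noteq> E a1' a2'"
      proof
        assume eq: "E a1 a2 = E a1' a2'"
        have w: "pat (idx a1 a2) = pat (idx a1' a2') \<and>
            hb (pat (idx a1 a2)) (a2 mod 2^k) = hb (pat (idx a1' a2')) (a2' mod 2^k)"
          using word_inj[OF sub[OF a] sub[OF a'] fF[OF a, unfolded FS_def] fF[OF a', unfolded FS_def]] eq
          unfolding E_def by blast
        then have ii: "idx a1 a2 = idx a1' a2'" using pat_inj a a' by blast
        then have d: "a2 div 2^k = a2' div 2^k" using idx_div(2)[OF a(2)] idx_div(2)[OF a'(2)] by metis
        have "a2 mod 2^k = a2' mod 2^k"
          using w ii hb[OF patP[OF a]] unfolding bij_betw_def inj_on_def by auto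
        then have "a2 = a2'" using d by (metis div_mult_mod_eq)
        then show False using ne by simp
      qed
      moreover have "length (E a1 a2) = length (E a1' a2')"
        unfolding E_def using word_props fF[OF a] fF[OF a'] unfolding FS_def by auto
      ultimately show "distinguishable GG2 (E a1 a2) (E a1' a2')" using dist_False by blast
    }
  qed
qed

lemma log_min: "0 < a \<Longrightarrow> 0 < b \<Longrightarrow> log 2 (min a b) = min (log 2 a) (log 2 b)"
  by (auto simp: min_def)

lemma min_div: "0 < (c::real) \<Longrightarrow> min a b / c = min (a / c) (b / c)"
  by (auto simp: min_def divide_le_cancel)

lemma feas_rate:
  assumes r: "0 < \<rho>" "\<rho> < 1" and s: "0 \<le> s" "s \<le> bin_entropy \<rho>"
  shows "feasible_rate Sg GG1 GG2 (bin_entropy \<rho> - s) (\<rho> + s)"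
proof -
  define kk where "kk n = nat \<lfloor>\<rho> * real n\<rfloor>" for n :: nat
  define C where "C n = n choose kk n" for n
  define cc where "cc n = nat \<lceil>2 powr (s * real n)\<rceil>" for n :: nat
  define gg where "gg n = min (C n) (cc n)" for n
  define m1 where "m1 n = C n div gg n" for n
  define m2 where "m2 n = gg n * 2 ^ kk n" for n
  have kn: "kk n \<le> n" for n
  proof -
    have "real (kk n) \<le> \<rho> * real n" unfolding kk_def using r by simp
    also have "\<dots> \<le> 1 * real n" using r by (intro mult_right_mono) auto
    finally show ?thesis by simp
  qed
  have C1: "1 \<le> C n" for n unfolding C_def using kn[of n] by (simp add: Suc_leI)
  have cc1: "1 \<le> cc n" for n
  proof -
    have "1 \<le> 2 powr (s * real n)" using s by (intro ge_one_powr_ge_zero) auto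
    then show ?thesis unfolding cc_def by linarith
  qed
  have g1: "1 \<le> gg n" "gg n \<le> C n" for n unfolding gg_def using C1 cc1 by auto
  have feas: "feasible_vector Sg GG1 GG2 n (m1 n) (m2 n)" for n
    unfolding m1_def m2_def C_def using construct[OF kn g1(1) g1(2)[unfolded C_def]] by simp
  have L1: "(\<lambda>n. real (kk n) / real n) \<longlonglongrightarrow> \<rho>" unfolding kk_def using lim_floor r by simp
  have evk: "eventually (\<lambda>n. 0 < kk n \<and> kk n < n) sequentially"
    using order_tendstoD(1)[OF L1 r(1)] order_tendstoD(2)[OF L1 r(2)] eventually_ge_at_top[of "1::nat"]
  proof eventually_elim
    case (elim n)
    then have "0 < kk n" by (cases "kk n = 0") auto
    moreover have "kk n < n"
    proof (rule ccontr)
      assume "\<not> kk n < n"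
      then have "real n \<le> real (kk n)" by simp
      then have "1 \<le> real (kk n) / real n" using elim by simp
      then show False using elim by simp
    qed
    ultimately show ?case by simp
  qed
  have ev1: "eventually (\<lambda>n. (1::nat) \<le> n) sequentially" by (rule eventually_ge_at_top)
  have L2: "(\<lambda>n. log 2 (real (C n)) / real n) \<longlonglongrightarrow> bin_entropy \<rho>"
  proof (rule real_tendsto_sandwich[where f="\<lambda>n. bin_entropy (real (kk n) / real n) - log 2 (real n + 1) / real n"
      and h="\<lambda>n. bin_entropy (real (kk n) / real n)"])
    have HL: "(\<lambda>n. bin_entropy (real (kk n) / real n)) \<longlonglongrightarrow> bin_entropy \<rho>"
      by (rule isCont_tendsto_compose[OF H_cont[OF r] L1])
    show "(\<lambda>n. bin_entropy (real (kk n) / real n)) \<longlonglongrightarrow> bin_entropy \<rho>" by (rule HL)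
    show "(\<lambda>n. bin_entropy (real (kk n) / real n) - log 2 (real n + 1) / real n) \<longlonglongrightarrow> bin_entropy \<rho>"
      using tendsto_diff[OF HL lim_log_over_n] by simp
    show "eventually (\<lambda>n. log 2 (real (C n)) / real n \<le> bin_entropy (real (kk n) / real n)) sequentially"
      using evk
    proof eventually_elim
      case (elim n)
      then have n: "real n > 0" by simp
      have "log 2 (real (C n)) \<le> real n * bin_entropy (real (kk n) / real n)"
        unfolding C_def using log_binom_bounds(1)[of "kk n" n] elim by simp
      then show ?case using n by (simp add: divide_le_eq mult.commute)
    qed
    show "eventually (\<lambda>n. bin_entropy (real (kk n) / real n) - log 2 (real n + 1) / real n \<le> log 2 (real (C n)) / real n) sequentially"
      using evk
    proof eventually_elim
      case (elim n)
      then have n: "real n > 0" by simp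
      have "real n * bin_entropy (real (kk n) / real n) - log 2 (real n + 1) \<le> log 2 (real (C n))"
        unfolding C_def using log_binom_bounds(2)[of "kk n" n] elim by simp
      then have "(real n * bin_entropy (real (kk n) / real n) - log 2 (real n + 1)) / real n \<le> log 2 (real (C n)) / real n"
        using n by (intro divide_right_mono) auto
      then show ?case using n by (simp add: diff_divide_distrib)
    qed
  qed
  have Lc: "(\<lambda>n. log 2 (real (cc n)) / real n) \<longlonglongrightarrow> s" unfolding cc_def using lim_ceil s by simp
  have L3: "(\<lambda>n. log 2 (real (gg n)) / real n) \<longlonglongrightarrow> s"
  proof -
    have e: "min (bin_entropy \<rho>) s = s" by (rule min_absorb2[OF s(2)])
    have *: "(\<lambda>n. min (log 2 (real (C n)) / real n) (log 2 (real (cc n)) / real n)) \<longlonglongrightarrow> s"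
      using tendsto_min[OF L2 Lc] unfolding e .
    show ?thesis
    proof (rule Lim_transform_eventually[OF *])
      show "eventually (\<lambda>n. min (log 2 (real (C n)) / real n) (log 2 (real (cc n)) / real n) = log 2 (real (gg n)) / real n) sequentially"
        using ev1
      proof eventually_elim
        case (elim n)
        then have n: "real n > 0" by simp
        have "real (gg n) = min (real (C n)) (real (cc n))" unfolding gg_def by simp
        then have "log 2 (real (gg n)) = min (log 2 (real (C n))) (log 2 (real (cc n)))"
          using C1[of n] cc1[of n] by (simp add: log_min)
        then show ?case using n by (simp add: min_div)
      qed
    qed
  qed
  have L4: "(\<lambda>n. log 2 (real (m2 n)) / real n) \<longlonglongrightarrow> \<rho> + s"
  proof -
    have *: "(\<lambda>n. real (kk n) / real n + log 2 (real (gg n)) / real n) \<longlonglongrightarrow> \<rho> + s"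
      by (rule tendsto_add[OF L1 L3])
    show ?thesis
    proof (rule Lim_transform_eventually[OF *])
      show "eventually (\<lambda>n. real (kk n) / real n + log 2 (real (gg n)) / real n = log 2 (real (m2 n)) / real n) sequentially"
      proof (rule always_eventually, rule allI)
        fix n
        have "log 2 (real (m2 n)) = log 2 (real (gg n)) + real (kk n)"
          unfolding m2_def using g1(1)[of n] by (simp add: log_mult_pos log_nat_power)
        then show "real (kk n) / real n + log 2 (real (gg n)) / real n = log 2 (real (m2 n)) / real n"
          by (simp add: add_divide_distrib)
      qed
    qed
  qed
  have L5: "(\<lambda>n. log 2 (real (m1 n)) / real n) \<longlonglongrightarrow> bin_entropy \<rho> - s"
  proof (rule real_tendsto_sandwich[where f="\<lambda>n. log 2 (real (C n)) / real n - log 2 (real (gg n)) / real n - 1 / real n"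
      and h="\<lambda>n. log 2 (real (C n)) / real n - log 2 (real (gg n)) / real n"])
    have D: "(\<lambda>n. log 2 (real (C n)) / real n - log 2 (real (gg n)) / real n) \<longlonglongrightarrow> bin_entropy \<rho> - s"
      by (rule tendsto_diff[OF L2 L3])
    show "(\<lambda>n. log 2 (real (C n)) / real n - log 2 (real (gg n)) / real n) \<longlonglongrightarrow> bin_entropy \<rho> - s"
      by (rule D)
    show "(\<lambda>n. log 2 (real (C n)) / real n - log 2 (real (gg n)) / real n - 1 / real n) \<longlonglongrightarrow> bin_entropy \<rho> - s"
      using tendsto_diff[OF D lim_const_over_n[of 1]] by simp
    have bnd: "log 2 (real (C n)) - log 2 (real (gg n)) - 1 \<le> log 2 (real (m1 n)) \<and>
               log 2 (real (m1 n)) \<le> log 2 (real (C n)) - log 2 (real (gg n))" for n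
    proof -
      define c where "c = C n"
      define g where "g = gg n"
      define q where "q = c div g"
      have g0: "1 \<le> g" "g \<le> c" unfolding g_def c_def using g1 by auto
      have q1: "1 \<le> q" unfolding q_def using g0
        by (metis One_nat_def div_greater_zero_iff less_eq_Suc_le le_trans not_less_eq_eq)
      have "q * g \<le> c" unfolding q_def by simp
      then have a: "real q * real g \<le> real c" by (metis of_nat_le_iff of_nat_mult)
      have "c < (q + 1) * g" unfolding q_def using g0
        by (metis add.commute div_mult_mod_eq mod_less_divisor mult_Suc nat_add_left_cancel_less
            plus_1_eq_Suc le_less_trans less_eq_Suc_le One_nat_def)
      also have "\<dots> \<le> (2 * q) * g" using q1 by (intro mult_le_mono1) simp
      finally have "c \<le> 2 * q * g" by simp
      then have b: "real c \<le> 2 * real q * real g" by (metis of_nat_le_iff of_nat_mult of_nat_numeral)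
      have pos: "real q > 0" "real g > 0" "real c > 0" using q1 g0 by auto
      have "log 2 (real c) \<le> log 2 (2 * real q * real g)" using b pos by (intro log_mono) auto
      also have "\<dots> = 1 + log 2 (real q) + log 2 (real g)" using pos by (simp add: log_mult_pos)
      finally have 1: "log 2 (real c) - log 2 (real g) - 1 \<le> log 2 (real q)" by simp
      have "log 2 (real q) + log 2 (real g) = log 2 (real q * real g)" using pos by (simp add: log_mult_pos)
      also have "\<dots> \<le> log 2 (real c)" using a pos by (intro log_mono) auto
      finally have 2: "log 2 (real q) \<le> log 2 (real c) - log 2 (real g)" by simp
      show ?thesis using 1 2 unfolding q_def c_def g_def m1_def by simp
    qed
    show "eventually (\<lambda>n. log 2 (real (C n)) / real n - log 2 (real (gg n)) / real n - 1 / real n \<le> log 2 (real (m1 n)) / real n) sequentially"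
      using ev1
    proof eventually_elim
      case (elim n)
      then have n: "real n > 0" by simp
      have "(log 2 (real (C n)) - log 2 (real (gg n)) - 1) / real n \<le> log 2 (real (m1 n)) / real n"
        using bnd[of n] n by (intro divide_right_mono) auto
      then show ?case by (simp add: diff_divide_distrib)
    qed
    show "eventually (\<lambda>n. log 2 (real (m1 n)) / real n \<le> log 2 (real (C n)) / real n - log 2 (real (gg n)) / real n) sequentially"
      using ev1
    proof eventually_elim
      case (elim n)
      then have n: "real n > 0" by simp
      have "log 2 (real (m1 n)) / real n \<le> (log 2 (real (C n)) - log 2 (real (gg n))) / real n"
        using bnd[of n] n by (intro divide_right_mono) auto
      then show ?case by (simp add: diff_divide_distrib)
    qed
  qed
  show ?thesis unfolding feasible_rate_def
    by (intro exI[of _ "\<lambda>k. k"] exI[of _ m1] exI[of _ m2] conjI allI feas L4 L5 filterlim_ident)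
qed

lemma rate_sum':
  assumes "feasible_rate Sg GG1 GG2 R1 R2"
  shows "R1 + R2 \<le> log 2 3"
  using assms unfolding feasible_rate_def using rate_sum by blast

lemma rate_B':
  assumes "feasible_rate Sg GG1 GG2 R1 R2" "1/2 \<le> \<rho>" "\<rho> \<le> 2/3"
  shows "R1 \<le> max (bin_entropy \<rho>) (bin_entropy \<rho> + \<rho> - R2)"
proof -
  obtain nn m1 m2 where "filterlim nn at_top sequentially"
    "\<forall>k. feasible_vector Sg GG1 GG2 (nn k) (m1 k) (m2 k)"
    "(\<lambda>k. log 2 (real (m1 k)) / real (nn k)) \<longlonglongrightarrow> R1"
    "(\<lambda>k. log 2 (real (m2 k)) / real (nn k)) \<longlonglongrightarrow> R2"
    using assms(1) unfolding feasible_rate_def by blast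
  then show ?thesis using rate_bound_B assms(2,3) by blast
qed

end

lemma H_nonneg:
  assumes "0 < x" "x < 1"
  shows "0 \<le> bin_entropy x"
proof -
  have a: "log 2 x \<le> 0" "log 2 (1 - x) \<le> 0" using assms by auto
  have "x * log 2 x \<le> 0" using a assms by (intro mult_nonneg_nonpos) auto
  moreover have "(1 - x) * log 2 (1 - x) \<le> 0" using a assms by (intro mult_nonneg_nonpos) auto
  ultimately show ?thesis unfolding bin_entropy_def by linarith
qed

lemma main:
  assumes "three s0 s1 s2"
  shows "(\<forall>R1 \<in> {0 .. bin_entropy (2/3)}. optimal_rate {s0, s1, s2} (\<lambda>a b. (a = s0 \<and> b = s1) \<or> (a = s1 \<and> b = s0)) (\<lambda>a b. False) R1 (log 2 3 - R1))
       \<and> (\<forall>R2 \<in> {1/2 .. 2/3}. optimal_rate {s0, s1, s2} (\<lambda>a b. (a = s0 \<and> b = s1) \<or> (a = s1 \<and> b = s0)) (\<lambda>a b. False) (bin_entropy R2) R2)"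
proof -
  interpret three s0 s1 s2 by (rule assms)
  have H23: "bin_entropy (2/3) = log 2 3 - 2/3" by (rule H_23)
  have part1: "optimal_rate Sg GG1 GG2 R1 (log 2 3 - R1)" if R1: "0 \<le> R1" "R1 \<le> bin_entropy (2/3)" for R1
    unfolding optimal_rate_def
  proof (intro conjI allI impI notI)
    have "feasible_rate Sg GG1 GG2 (bin_entropy (2/3) - (bin_entropy (2/3) - R1)) (2/3 + (bin_entropy (2/3) - R1))"
      by (rule feas_rate) (use R1 in auto)
    moreover have "2/3 + (bin_entropy (2/3) - R1) = log 2 3 - R1" using H23 by simp
    ultimately show "feasible_rate Sg GG1 GG2 R1 (log 2 3 - R1)" by simp
    fix R1' assume "R1 < R1'" "feasible_rate Sg GG1 GG2 R1' (log 2 3 - R1)"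
    then show False using rate_sum' by fastforce
  next
    fix R2' assume "log 2 3 - R1 < R2'" "feasible_rate Sg GG1 GG2 R1 R2'"
    then show False using rate_sum' by fastforce
  qed
  have part2: "optimal_rate Sg GG1 GG2 (bin_entropy R2) R2" if R2: "1/2 \<le> R2" "R2 \<le> 2/3" for R2
    unfolding optimal_rate_def
  proof (intro conjI allI impI notI)
    have "feasible_rate Sg GG1 GG2 (bin_entropy R2 - 0) (R2 + 0)"
      by (rule feas_rate) (use R2 H_nonneg[of R2] in auto)
    then show "feasible_rate Sg GG1 GG2 (bin_entropy R2) R2" by simp
    fix R1' assume "bin_entropy R2 < R1'" "feasible_rate Sg GG1 GG2 R1' R2"
    then show False using rate_B'[of R1' R2 R2] R2 by auto
  next
    fix R2' assume lt: "R2 < R2'" and f: "feasible_rate Sg GG1 GG2 (bin_entropy R2) R2'"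
    show False
    proof (cases "R2' \<le> 2/3")
      case True
      have "bin_entropy R2 \<le> max (bin_entropy R2') (bin_entropy R2' + R2' - R2')"
        using rate_B'[OF f, of R2'] True lt R2 by auto
      moreover have "bin_entropy R2' < bin_entropy R2" using H_dec_strict[of R2 R2'] lt True R2 by auto
      ultimately show False by simp
    next
      case False
      have "bin_entropy (2/3) \<le> bin_entropy R2"
      proof (cases "R2 = 2/3")
        case False then show ?thesis using H_dec_strict[of R2 "2/3"] R2 by auto
      next
        case True then show ?thesis by (simp only:)
      qed
      then show False using rate_sum'[OF f] False H23 by simp
    qed
  qed
  show ?thesis using part1 part2 by auto
qed

theorem proposition17:
  fixes \<sigma>0 \<sigma>1 \<sigma>2 :: 'a
  assumes "\<sigma>0 \<noteq> \<sigma>1" "\<sigma>0 \<noteq> \<sigma>2" "\<sigma>1 \<noteq> \<sigma>2"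
  defines "\<Sigma> \<equiv> {\<sigma>0, \<sigma>1, \<sigma>2}"
    and "G1 \<equiv> (\<lambda>a b. (a = \<sigma>0 \<and> b = \<sigma>1) \<or> (a = \<sigma>1 \<and> b = \<sigma>0))"
    and "G2 \<equiv> (\<lambda>a b. False)"
  shows "(\<forall>R1 \<in> {0 .. bin_entropy (2/3)}. optimal_rate \<Sigma> G1 G2 R1 (log 2 3 - R1))
       \<and> (\<forall>R2 \<in> {1/2 .. 2/3}. optimal_rate \<Sigma> G1 G2 (bin_entropy R2) R2)"
proof -
  have "three \<sigma>0 \<sigma>1 \<sigma>2" using assms(1-3) by unfold_locales
  from main[OF this] show ?thesis unfolding \<Sigma>_def G1_def G2_def .
qed

end
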